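(* Let $l\ge4$. In the simple vertex operator algebra $L_{B_l}(-l+\tfrac32,0)$ the following relation holds: $$(2l-1)\sum_{i=1}^l\big(e_{\epsilon_i}(-1)f_{\epsilon_i}(-1)+f_{\epsilon_i}(-1)e_{\epsilon_i}(-1)\big)\mathbf 1=4\sum_{\alpha\in\Delta^+_{D_l}}\big(e_\alpha(-1)f_\alpha(-1)+f_\alpha(-1)e_\alpha(-1)\big)\mathbf 1+\sum_{i=1}^lh_{\epsilon_i}(-1)^2\mathbf 1.$$
   Context: Setup: for $l\ge4$ let $Cliff(A)$ be the Clifford algebra on $A=\bigoplus_{i=1}^l(\mathbb C a_i\oplus\mathbb C a_i^* )$ with $[a_i,a_j]_+=[a_i^*,a_j^*]_+=0$, $[a_i,a_j^*]_+=\delta_{ij}$; put $:xy:=\tfrac12(xy-yx)$. The span of all $:xy:$ is $\mathfrak g_{D_l}$, and $\mathfrak g_{B_l}=\mathfrak g_{D_l}\oplus A$ is the simple Lie algebra of type $B_l$, with Cartan subalgebra spanned by $H_i=:a_ia_i^*:$, $\epsilon_i(H_j)=\delta_{ij}$. Positive roots: $\Delta^+_{D_l}=\{\epsilon_i\pm\epsilon_j:i<j\}$, and $\Delta^+_{B_l}=\Delta^+_{D_l}\cup\{\epsilon_i\}$; the short positive roots (squared length 1, with long roots of squared length 2) are the $\epsilon_i$. Root vectors ($i<j$): $e_{\epsilon_i-\epsilon_j}=:a_ia_j^*:$, $e_{\epsilon_i+\epsilon_j}=:a_ia_j:$, $f_{\epsilon_i-\epsilon_j}=:a_ja_i^*:$,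 $f_{\epsilon_i+\epsilon_j}=:a_j^*a_i^*:$, $e_{\epsilon_i}=a_i$, $f_{\epsilon_i}=a_i^*$; $h_\alpha=[e_\alpha,f_\alpha]$, so $h_{\epsilon_i}=2H_i$. $\hat{\mathfrak g}_{B_l}=\mathfrak g_{B_l}\otimes\mathbb C[t,t^{-1}]\oplus\mathbb Cc$, $x(n)=x\otimes t^n$; $L_{B_l}(k,0)$ is the simple quotient of the level-$k$ vacuum generalized Verma module $N_{B_l}(k,0)$ (vacuum vector $\mathbf 1$), and the displayed vectors denote their images in $L_{B_l}(k,0)$. *)

theory Defs
  imports Complex_Main
begin

text \<open>Index set of the (2l+1)-dimensional space: a_i (P i), a_i^* (M i), and an
  extra vector e0 (Z).  The symmetric form has (a_i,a_j^*) = delta_ij as in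
  the Clifford algebra and (e0,e0) = -2.  The Lie algebra g_{B_l} is realised as
  the B-antisymmetric matrices (i.e. so(2l+1)); the element :xy: of g_{D_l} is
  realised as its adjoint action on A, z |-> x(y,z) - (x,z)y, which is
  wedge x y, and the element x in A is realised as wedge e0 x.  With these
  choices the brackets agree with those of the paper ([x,y] = 2:xy: for x,y in A).\<close>

datatype ix = Z | P nat | M nat

type_synonym vec = "ix \<Rightarrow> complex"
type_synonym mat = "ix \<Rightarrow> ix \<Rightarrow> complex"

definition Jl :: "nat \<Rightarrow> ix set" where
  "Jl l = {Z} \<union> P ` {1..l} \<union> M ` {1..l}"

definition Bm :: "ix \<Rightarrow> ix \<Rightarrow> complex" where
  "Bm p q = (case (p, q) of
      (P i, M j) \<Rightarrow> (if i = j then 1 else 0)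
    | (M i, P j) \<Rightarrow> (if i = j then 1 else 0)
    | (Z, Z) \<Rightarrow> -2
    | _ \<Rightarrow> 0)"

definition ub :: "ix \<Rightarrow> vec" where
  "ub p = (\<lambda>q. if q = p then 1 else 0)"

definition mmul :: "nat \<Rightarrow> mat \<Rightarrow> mat \<Rightarrow> mat" where
  "mmul l X Y = (\<lambda>p q. \<Sum>r\<in>Jl l. X p r * Y r q)"

definition comm :: "nat \<Rightarrow> mat \<Rightarrow> mat \<Rightarrow> mat" where
  "comm l X Y = (\<lambda>p q. mmul l X Y p q - mmul l Y X p q)"

definition mlin :: "complex \<Rightarrow> mat \<Rightarrow> complex \<Rightarrow> mat \<Rightarrow> mat" where
  "mlin a X b Y = (\<lambda>p q. a * X p q + b * Y p q)"

text \<open>Normalized invariant form: (x,y) = tr(xy)/2 in the vector representation,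
  so that long roots have squared length 2.\<close>
definition nform :: "nat \<Rightarrow> mat \<Rightarrow> mat \<Rightarrow> complex" where
  "nform l X Y = (\<Sum>p\<in>Jl l. mmul l X Y p p) / 2"

definition gB :: "nat \<Rightarrow> mat set" where
  "gB l = {X. (\<forall>p q. (p \<notin> Jl l \<or> q \<notin> Jl l) \<longrightarrow> X p q = 0) \<and>
     (\<forall>p\<in>Jl l. \<forall>q\<in>Jl l. (\<Sum>r\<in>Jl l. X r p * Bm r q) + (\<Sum>r\<in>Jl l. Bm p r * X r q) = 0)}"

definition wedge :: "nat \<Rightarrow> vec \<Rightarrow> vec \<Rightarrow> mat" where
  "wedge l x y = (\<lambda>p q. x p * (\<Sum>r\<in>Jl l. y r * Bm r q) - y p * (\<Sum>r\<in>Jl l. x r * Bm r q))"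

abbreviation av :: "nat \<Rightarrow> vec" where "av i \<equiv> ub (P i)"
abbreviation asv :: "nat \<Rightarrow> vec" where "asv i \<equiv> ub (M i)"
abbreviation e0 :: vec where "e0 \<equiv> ub Z"

text \<open>Root vectors (i < j).\<close>
definition e_minus :: "nat \<Rightarrow> nat \<Rightarrow> nat \<Rightarrow> mat" where "e_minus l i j = wedge l (av i) (asv j)"
definition e_plus  :: "nat \<Rightarrow> nat \<Rightarrow> nat \<Rightarrow> mat" where "e_plus l i j = wedge l (av i) (av j)"
definition f_minus :: "nat \<Rightarrow> nat \<Rightarrow> nat \<Rightarrow> mat" where "f_minus l i j = wedge l (av j) (asv i)"
definition f_plus  :: "nat \<Rightarrow> nat \<Rightarrow> nat \<Rightarrow> mat" where "f_plus l i j = wedge l (asv j) (asv i)"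
definition e_short :: "nat \<Rightarrow> nat \<Rightarrow> mat" where "e_short l i = wedge l e0 (av i)"
definition f_short :: "nat \<Rightarrow> nat \<Rightarrow> mat" where "f_short l i = wedge l e0 (asv i)"
definition h_short :: "nat \<Rightarrow> nat \<Rightarrow> mat" where "h_short l i = comm l (e_short l i) (f_short l i)"

text \<open>Positive roots of D_l, as triples (sign, i, j) with i < j.\<close>
definition posD :: "nat \<Rightarrow> (bool \<times> nat \<times> nat) set" where
  "posD l = {(s, i, j). 1 \<le> i \<and> i < j \<and> j \<le> l}"

definition e_root :: "nat \<Rightarrow> bool \<times> nat \<times> nat \<Rightarrow> mat" where
  "e_root l r = (case r of (s, i, j) \<Rightarrow> if s then e_plus l i j else e_minus l i j)"
definition f_root :: "nat \<Rightarrow> bool \<times> nat \<times> nat \<Rightarrow> mat" where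
  "f_root l r = (case r of (s, i, j) \<Rightarrow> if s then f_plus l i j else f_minus l i j)"

text \<open>A module V (with scalar multiplication sm) for the affine algebra
  \<^emph>\<open>hat g_{B_l}\<close> extended by the degree derivation D, on which c acts by k,
  which contains a vacuum vector vac annihilated by g tensor C[t] and which is
  irreducible.  Any such module is isomorphic to L_{B_l}(k,0) with vac the
  image of the vacuum vector, and conversely L_{B_l}(k,0) is one.\<close>
definition is_simple_vacuum_module ::
  "nat \<Rightarrow> complex \<Rightarrow> (complex \<Rightarrow> 'v::ab_group_add \<Rightarrow> 'v) \<Rightarrow>
   (mat \<Rightarrow> int \<Rightarrow> 'v \<Rightarrow> 'v) \<Rightarrow> ('v \<Rightarrow> 'v) \<Rightarrow> 'v \<Rightarrow> bool" where
  "is_simple_vacuum_module l k sm \<rho> D vac \<longleftrightarrow>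
     module sm \<and>
     (\<forall>X\<in>gB l. \<forall>n v w. \<rho> X n (v + w) = \<rho> X n v + \<rho> X n w) \<and>
     (\<forall>X\<in>gB l. \<forall>n c v. \<rho> X n (sm c v) = sm c (\<rho> X n v)) \<and>
     (\<forall>X\<in>gB l. \<forall>Y\<in>gB l. \<forall>a b n v.
        \<rho> (mlin a X b Y) n v = sm a (\<rho> X n v) + sm b (\<rho> Y n v)) \<and>
     (\<forall>X\<in>gB l. \<forall>Y\<in>gB l. \<forall>m n v.
        \<rho> X m (\<rho> Y n v) - \<rho> Y n (\<rho> X m v) =
        \<rho> (comm l X Y) (m + n) v +
        sm (if m + n = 0 then of_int m * k * nform l X Y else 0) v) \<and>
     (\<forall>v w. D (v + w) = D v + D w) \<and>
     (\<forall>c v. D (sm c v) = sm c (D v)) \<and>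
     (\<forall>X\<in>gB l. \<forall>n v. D (\<rho> X n v) = \<rho> X n (D v) - sm (of_int n) (\<rho> X n v)) \<and>
     vac \<noteq> 0 \<and> D vac = 0 \<and>
     (\<forall>X\<in>gB l. \<forall>n \<ge> 0. \<rho> X n vac = 0) \<and>
     (\<forall>W. 0 \<in> W \<and> (\<forall>v\<in>W. \<forall>w\<in>W. v + w \<in> W) \<and> (\<forall>c. \<forall>v\<in>W. sm c v \<in> W) \<and>
          (\<forall>X\<in>gB l. \<forall>n. \<forall>v\<in>W. \<rho> X n v \<in> W) \<and> (\<forall>v\<in>W. D v \<in> W) \<and>
          W \<noteq> {0} \<longrightarrow> W = UNIV)"

end

theory Submission
  imports Defs
begin

definition dual :: "ix \<Rightarrow> ix" where
  "dual p = (case p of Z \<Rightarrow> Z | P i \<Rightarrow> M i | M i \<Rightarrow> P i)"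
definition bf :: "ix \<Rightarrow> complex" where
  "bf p = (case p of Z \<Rightarrow> -2 | _ \<Rightarrow> 1)"

lemma dual_simps[simp]: "dual Z = Z" "dual (P i) = M i" "dual (M i) = P i"
  by (simp_all add: dual_def)
lemma bf_simps[simp]: "bf Z = -2" "bf (P i) = 1" "bf (M i) = 1"
  by (simp_all add: bf_def)

lemma ifm1: "(if c then x else 0) * (z::complex) = (if c then x * z else 0)" by simp
lemma ifm2: "(z::complex) * (if c then x else 0) = (if c then z * x else 0)" by simp

lemma Bm_eq: "Bm t q = (if q = dual t then bf t else 0)"
  by (cases t; cases q) (auto simp: Bm_def)

lemma Jl_mem[simp]: "Z \<in> Jl l" "P i \<in> Jl l \<longleftrightarrow> 1 \<le> i \<and> i \<le> l" "M i \<in> Jl l \<longleftrightarrow> 1 \<le> i \<and> i \<le> l"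
  by (auto simp: Jl_def)

lemma dual_J[simp]: "dual t \<in> Jl l \<longleftrightarrow> t \<in> Jl l"
  by (cases t) auto

lemma finite_Jl[simp]: "finite (Jl l)" by (simp add: Jl_def)

lemma sum_Jl: "(\<Sum>r\<in>Jl l. g r) = g Z + (\<Sum>i\<in>{1..l}. g (P i)) + (\<Sum>i\<in>{1..l}. g (M i))"
proof -
  have "Jl l = insert Z (P ` {1..l} \<union> M ` {1..l})" by (auto simp: Jl_def)
  moreover have "Z \<notin> P ` {1..l} \<union> M ` {1..l}" by auto
  moreover have "P ` {1..l} \<inter> M ` {1..l} = {}" by auto
  ultimately show ?thesis
    by (simp add: sum.union_disjoint sum.reindex inj_on_def add.assoc)
qed

lemma sum_Bm_left: "t \<in> Jl l \<Longrightarrow> (\<Sum>r\<in>Jl l. Bm t r * g r) = bf t * g (dual t)"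
  by (simp add: Bm_eq ifm1 sum.delta)
lemma sum_Bm_right: "t \<in> Jl l \<Longrightarrow> (\<Sum>r\<in>Jl l. g r * Bm r t) = g (dual t) * bf t"
proof -
  have "\<And>r. Bm r t = Bm t r" by (auto simp: Bm_def split: ix.split)
  then show "t \<in> Jl l \<Longrightarrow> ?thesis" using sum_Bm_left[of t l g]
    by (simp add: mult.commute)
qed

lemma Bm_sym: "Bm r t = Bm t r" by (auto simp: Bm_def split: ix.split)
lemma sum_Bm_right2: "t \<in> Jl l \<Longrightarrow> (\<Sum>r\<in>Jl l. Bm r t * g r) = bf t * g (dual t)"
  by (simp add: Bm_sym[of _ t] sum_Bm_left)
lemma sum_Bm_left2: "t \<in> Jl l \<Longrightarrow> (\<Sum>r\<in>Jl l. g r * Bm t r) = g (dual t) * bf t"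
  by (simp add: Bm_sym[of t] sum_Bm_right)

definition supp :: "nat \<Rightarrow> mat \<Rightarrow> bool" where
  "supp l C \<longleftrightarrow> (\<forall>p q. (p \<notin> Jl l \<or> q \<notin> Jl l) \<longrightarrow> C p q = 0)"

abbreviation W :: "nat \<Rightarrow> ix \<Rightarrow> ix \<Rightarrow> mat" where "W l s t \<equiv> wedge l (ub s) (ub t)"

lemma sum_ub: "(\<Sum>r\<in>Jl l. ub t r * g r) = (if t \<in> Jl l then g t else 0)"
  by (simp add: ub_def ifm1 sum.delta)

lemma W_entry: "s \<in> Jl l \<Longrightarrow> t \<in> Jl l \<Longrightarrow>
  W l s t p q = (if p = s then Bm t q else 0) - (if p = t then Bm s q else 0)"
  by (simp add: wedge_def sum_ub) (simp add: ub_def)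

lemma comm_W: assumes "supp l C" "s \<in> Jl l" "t \<in> Jl l"
  shows "comm l C (W l s t) p q = C p s * Bm t q - C p t * Bm s q
     - (if p = s then bf t * C (dual t) q else 0) + (if p = t then bf s * C (dual s) q else 0)"
proof -
  have 1: "mmul l C (W l s t) p q = C p s * Bm t q - C p t * Bm s q"
    using assms by (simp add: mmul_def W_entry right_diff_distrib sum_subtractf ifm2 sum.delta)
  have 2: "mmul l (W l s t) C p q = (if p = s then bf t * C (dual t) q else 0) - (if p = t then bf s * C (dual s) q else 0)"
    using assms by (simp add: mmul_def W_entry left_diff_distrib sum_subtractf sum_Bm_left)
  show ?thesis using 1 2 by (simp add: comm_def)
qed

lemma gB_supp: "X \<in> gB l \<Longrightarrow> supp l X"
  by (simp add: gB_def supp_def)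

lemma gB_rel: assumes "X \<in> gB l" "p \<in> Jl l" "q \<in> Jl l"
  shows "bf q * X (dual q) p = - (bf p * X (dual p) q)"
proof -
  have "(\<Sum>r\<in>Jl l. X r p * Bm r q) + (\<Sum>r\<in>Jl l. Bm p r * X r q) = 0"
    using assms by (simp add: gB_def)
  then show ?thesis using assms by (simp add: sum_Bm_left sum_Bm_right sum_Bm_left2 sum_Bm_right2 add_eq_0_iff mult.commute)
qed

lemma supp_W: "s \<in> Jl l \<Longrightarrow> t \<in> Jl l \<Longrightarrow> supp l (W l s t)"
  by (auto simp: supp_def W_entry Bm_eq)

lemma supp_comm: "supp l C \<Longrightarrow> supp l D \<Longrightarrow> supp l (comm l C D)"
  by (auto simp: supp_def comm_def mmul_def)

lemma nform_W: assumes "X \<in> gB l" "s \<in> Jl l" "t \<in> Jl l"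
  shows "nform l X (W l s t) = bf t * X (dual t) s"
proof -
  have "nform l X (W l s t) = (\<Sum>p\<in>Jl l. X p s * Bm t p - X p t * Bm s p) / 2"
    using assms by (simp add: nform_def mmul_def W_entry right_diff_distrib sum_subtractf ifm2 sum.delta)
  also have "\<dots> = (X (dual t) s * bf t - X (dual s) t * bf s) / 2"
    using assms by (simp add: sum_subtractf sum_Bm_right sum_Bm_left2)
  finally show ?thesis using gB_rel[OF assms(1) assms(2) assms(3)] by (simp add: mult.commute)
qed

lemma h_short_eq: "1 \<le> i \<Longrightarrow> i \<le> l \<Longrightarrow> h_short l i = (\<lambda>p q. 2 * W l (P i) (M i) p q)"
  apply (rule ext)+
  apply (simp add: h_short_def e_short_def f_short_def comm_W supp_W W_entry Bm_eq)
  done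


definition XA :: "mat \<Rightarrow> mat" where "XA X p q = (if p = Z \<or> q = Z then X p q else 0)"
definition XD :: "mat \<Rightarrow> mat" where "XD X p q = (if p \<noteq> Z \<and> q \<noteq> Z then X p q else 0)"
definition XH :: "mat \<Rightarrow> mat" where "XH X p q = (if p \<noteq> Z \<and> p = q then X p q else 0)"

lemma gB_rels: assumes X: "X \<in> gB l"
  shows "X Z Z = 0"
    "1 \<le> i \<Longrightarrow> i \<le> l \<Longrightarrow> X (M i) Z = 2 * X Z (P i)"
    "1 \<le> i \<Longrightarrow> i \<le> l \<Longrightarrow> X (P i) Z = 2 * X Z (M i)"
    "1 \<le> i \<Longrightarrow> i \<le> l \<Longrightarrow> X (M i) (P i) = 0"
    "1 \<le> i \<Longrightarrow> i \<le> l \<Longrightarrow> X (P i) (M i) = 0"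
    "1 \<le> i \<Longrightarrow> i \<le> l \<Longrightarrow> 1 \<le> j \<Longrightarrow> j \<le> l \<Longrightarrow> X (M i) (M j) = - X (P j) (P i)"
  using gB_rel[OF X, of Z Z] gB_rel[OF X, of Z "P i"] gB_rel[OF X, of Z "M i"]
    gB_rel[OF X, of "P i" "P i"] gB_rel[OF X, of "M i" "M i"] gB_rel[OF X, of "M j" "P i"]
  by auto

lemma supp0: "supp l X \<Longrightarrow> \<not> (1 \<le> i \<and> i \<le> l) \<Longrightarrow> X p (P i) = 0"
  "supp l X \<Longrightarrow> \<not> (1 \<le> i \<and> i \<le> l) \<Longrightarrow> X p (M i) = 0"
  "supp l X \<Longrightarrow> \<not> (1 \<le> i \<and> i \<le> l) \<Longrightarrow> X (P i) q = 0"
  "supp l X \<Longrightarrow> \<not> (1 \<le> i \<and> i \<le> l) \<Longrightarrow> X (M i) q = 0"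
  by (auto simp: supp_def)

lemma supp0': "supp l X \<Longrightarrow> X p (P 0) = 0" "supp l X \<Longrightarrow> X p (M 0) = 0"
  "supp l X \<Longrightarrow> X (P 0) q = 0" "supp l X \<Longrightarrow> X (M 0) q = 0"
  "supp l X \<Longrightarrow> l < i \<Longrightarrow> X p (P i) = 0" "supp l X \<Longrightarrow> l < i \<Longrightarrow> X p (M i) = 0"
  "supp l X \<Longrightarrow> l < i \<Longrightarrow> X (P i) q = 0" "supp l X \<Longrightarrow> l < i \<Longrightarrow> X (M i) q = 0"
  by (auto simp: supp_def)

lemmas entry_simps = e_short_def f_short_def nform_W W_entry Bm_eq comm_W supp_W supp_comm gB_supp
   ifm1 ifm2 sum.distrib sum.delta sum.delta' sum_subtractf

lemma A2: assumes X: "X \<in> gB l"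
  shows "(\<Sum>i\<in>{1..l}. comm l (comm l X (e_short l i)) (f_short l i) p q + comm l (comm l X (f_short l i)) (e_short l i) p q)
     = 2 * (2 * of_nat l - 1) * XA X p q + 4 * XD X p q"
proof -
  have s: "supp l X" using X by (rule gB_supp)
  show ?thesis
  proof (cases p)
    case Z then show ?thesis using s X gB_rels[OF X] by (cases q) (auto simp: XA_def XD_def entry_simps supp0'[OF s] supp0[OF s] algebra_simps)
  next
    case (P a) then show ?thesis using s X gB_rels[OF X] gB_rel[OF X, of p q] by (cases q) (auto simp: XA_def XD_def entry_simps supp0'[OF s] supp0[OF s] algebra_simps)
  next
    case (M a) then show ?thesis using s X gB_rels[OF X] gB_rel[OF X, of p q] by (cases q) (auto simp: XA_def XD_def entry_simps supp0'[OF s] supp0[OF s] algebra_simps)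
  qed
qed

lemma sum_posD: "(\<Sum>r\<in>posD l. F r) = (\<Sum>i\<in>{1..l}. \<Sum>j\<in>{Suc i..l}. F (True, i, j) + F (False, i, j))"
proof -
  define S where "S = {(i,j). 1 \<le> i \<and> i < j \<and> j \<le> (l::nat)}"
  have fS: "finite S" unfolding S_def by (rule finite_subset[of _ "{1..l} \<times> {1..l}"]) auto
  have "posD l = UNIV \<times> S" by (auto simp: posD_def S_def)
  then have "(\<Sum>r\<in>posD l. F r) = (\<Sum>s\<in>UNIV. \<Sum>ij\<in>S. F (s, ij))"
    using fS by (simp add: sum.cartesian_product)
  also have "\<dots> = (\<Sum>ij\<in>S. F (True, ij) + F (False, ij))"
    by (simp add: UNIV_bool sum.distrib add.commute)
  also have "S = Sigma {1..l} (\<lambda>i. {Suc i..l})" by (auto simp: S_def)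
  also have "(\<Sum>ij\<in>Sigma {1..l} (\<lambda>i. {Suc i..l}). F (True, ij) + F (False, ij))
     = (\<Sum>i\<in>{1..l}. \<Sum>j\<in>{Suc i..l}. F (True, i, j) + F (False, i, j))"
    by (subst sum.Sigma) auto
  finally show ?thesis .
qed

lemma zif: "(if c then 0 * (x::complex) else 0) = 0" "(if c then (x::complex) * 0 else 0) = 0" by simp_all

lemmas root_simps = e_plus_def e_minus_def f_plus_def f_minus_def

lemma sym_half: fixes G :: "nat \<Rightarrow> nat \<Rightarrow> complex"
  assumes sym: "\<And>i j. G i j = G j i"
  shows "(\<Sum>i\<in>{1..l}. \<Sum>j\<in>{Suc i..l}. G i j) = ((\<Sum>i\<in>{1..l}. \<Sum>j\<in>{1..l}. G i j) - (\<Sum>i\<in>{1..l}. G i i)) / 2"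
proof -
  have "2 * (\<Sum>i\<in>{1..l}. \<Sum>j\<in>{Suc i..l}. G i j) + (\<Sum>i\<in>{1..l}. G i i) = (\<Sum>i\<in>{1..l}. \<Sum>j\<in>{1..l}. G i j)"
  proof (induction l)
    case 0 then show ?case by simp
  next
    case (Suc l)
    have e1: "(\<Sum>i\<in>{1..Suc l}. \<Sum>j\<in>{Suc i..Suc l}. G i j) = (\<Sum>i\<in>{1..l}. \<Sum>j\<in>{Suc i..l}. G i j) + (\<Sum>i\<in>{1..l}. G i (Suc l))"
    proof -
      have "(\<Sum>i\<in>{1..Suc l}. \<Sum>j\<in>{Suc i..Suc l}. G i j) = (\<Sum>i\<in>{1..l}. \<Sum>j\<in>{Suc i..Suc l}. G i j)"
        by (simp add: sum.atLeast_Suc_atMost_Suc_shift)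
      also have "\<dots> = (\<Sum>i\<in>{1..l}. (\<Sum>j\<in>{Suc i..l}. G i j) + G i (Suc l))"
        by (intro sum.cong) auto
      finally show ?thesis by (simp add: sum.distrib)
    qed
    have e2: "(\<Sum>i\<in>{1..Suc l}. \<Sum>j\<in>{1..Suc l}. G i j) = (\<Sum>i\<in>{1..l}. \<Sum>j\<in>{1..l}. G i j) + (\<Sum>i\<in>{1..l}. G i (Suc l)) + (\<Sum>j\<in>{1..l}. G (Suc l) j) + G (Suc l) (Suc l)"
      by (simp add: sum.distrib algebra_simps)
    have e3: "(\<Sum>j\<in>{1..l}. G (Suc l) j) = (\<Sum>i\<in>{1..l}. G i (Suc l))" using sym by simp
    show ?case using Suc.IH e1 e2 e3 by (simp add: algebra_simps)
  qed
  then show ?thesis by (simp add: field_simps)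
qed

lemma wedge_swap: "wedge l y x = (\<lambda>p q. - wedge l x y p q)"
  by (simp add: wedge_def)
lemma nform_neg: "nform l X (\<lambda>p q. - E p q) = - nform l X E"
  by (simp add: nform_def mmul_def sum_negf)
lemma comm_neg1: "comm l C (\<lambda>p q. - E p q) = (\<lambda>p q. - comm l C E p q)"
  by (simp add: comm_def mmul_def sum_negf)
lemma comm_neg2: "comm l (\<lambda>p q. - E p q) C = (\<lambda>p q. - comm l E C p q)"
  by (simp add: comm_def mmul_def sum_negf)

lemma sum_if_const: "(\<Sum>j\<in>S. if c then g j else 0) = (if c then (\<Sum>j\<in>S. g j) else 0)"
  by simp

definition GB1 :: "nat \<Rightarrow> mat \<Rightarrow> nat \<Rightarrow> nat \<Rightarrow> ix \<Rightarrow> ix \<Rightarrow> complex" where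
  "GB1 l X i j p q = nform l X (f_plus l i j) * e_plus l i j p q + nform l X (e_plus l i j) * f_plus l i j p q
     + (nform l X (f_minus l i j) * e_minus l i j p q + nform l X (e_minus l i j) * f_minus l i j p q)"

lemma root_swap: "e_plus l j i = (\<lambda>p q. - e_plus l i j p q)" "f_plus l j i = (\<lambda>p q. - f_plus l i j p q)"
  "e_minus l j i = f_minus l i j" "f_minus l j i = e_minus l i j"
  by (simp_all add: e_plus_def f_plus_def e_minus_def f_minus_def wedge_swap[of l "ub (P j)"] wedge_swap[of l "ub (M j)"])

lemma GB1_sym: "GB1 l X i j p q = GB1 l X j i p q"
  unfolding GB1_def root_swap[of l j i] by (simp add: nform_neg algebra_simps)

lemma B1full: assumes X: "X \<in> gB l"
  shows "(\<Sum>i\<in>{1..l}. \<Sum>j\<in>{1..l}. GB1 l X i j p q) = 2 * XD X p q"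
proof -
  have s: "supp l X" using X by (rule gB_supp)
  show ?thesis
  proof (cases p)
    case Z then show ?thesis using s X gB_rels[OF X] by (cases q) (auto simp: GB1_def root_simps XH_def XD_def entry_simps supp0'[OF s] supp0[OF s] sum_if_const zif sum_negf algebra_simps)
  next
    case (P a) then show ?thesis using s X gB_rels[OF X] gB_rel[OF X, of p q] gB_rel[OF X, of "dual p" "dual q"] gB_rel[OF X, of "dual p" q] gB_rel[OF X, of p "dual q"] by (cases q) (auto simp: GB1_def root_simps XH_def XD_def entry_simps supp0'[OF s] supp0[OF s] sum_if_const zif sum_negf algebra_simps)
  next
    case (M a) then show ?thesis using s X gB_rels[OF X] gB_rel[OF X, of p q] gB_rel[OF X, of "dual p" "dual q"] gB_rel[OF X, of "dual p" q] gB_rel[OF X, of p "dual q"] by (cases q) (auto simp: GB1_def root_simps XH_def XD_def entry_simps supp0'[OF s] supp0[OF s] sum_if_const zif sum_negf algebra_simps)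
  qed
qed

lemma B1diag: assumes X: "X \<in> gB l"
  shows "(\<Sum>i\<in>{1..l}. GB1 l X i i p q) = 2 * XH X p q"
proof -
  have s: "supp l X" using X by (rule gB_supp)
  show ?thesis
  proof (cases p)
    case Z then show ?thesis using s X gB_rels[OF X] by (cases q) (auto simp: GB1_def root_simps XH_def XD_def entry_simps supp0'[OF s] supp0[OF s] sum_if_const zif sum_negf algebra_simps)
  next
    case (P a) then show ?thesis using s X gB_rels[OF X] gB_rel[OF X, of p q] gB_rel[OF X, of "dual p" "dual q"] gB_rel[OF X, of "dual p" q] gB_rel[OF X, of p "dual q"] by (cases q) (auto simp: GB1_def root_simps XH_def XD_def entry_simps supp0'[OF s] supp0[OF s] sum_if_const zif sum_negf algebra_simps)
  next
    case (M a) then show ?thesis using s X gB_rels[OF X] gB_rel[OF X, of p q] gB_rel[OF X, of "dual p" "dual q"] gB_rel[OF X, of "dual p" q] gB_rel[OF X, of p "dual q"] by (cases q) (auto simp: GB1_def root_simps XH_def XD_def entry_simps supp0'[OF s] supp0[OF s] sum_if_const zif sum_negf algebra_simps)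
  qed
qed

definition GB2 :: "nat \<Rightarrow> mat \<Rightarrow> nat \<Rightarrow> nat \<Rightarrow> ix \<Rightarrow> ix \<Rightarrow> complex" where
  "GB2 l X i j p q = comm l (comm l X (e_plus l i j)) (f_plus l i j) p q + comm l (comm l X (f_plus l i j)) (e_plus l i j) p q
     + (comm l (comm l X (e_minus l i j)) (f_minus l i j) p q + comm l (comm l X (f_minus l i j)) (e_minus l i j) p q)"

lemma GB2_sym: "GB2 l X i j p q = GB2 l X j i p q"
  unfolding GB2_def root_swap[of l j i] by (simp add: comm_neg1 comm_neg2 algebra_simps)

lemma B2full: assumes X: "X \<in> gB l"
  shows "(\<Sum>i\<in>{1..l}. \<Sum>j\<in>{1..l}. GB2 l X i j p q) = (4 * of_nat l - 2) * XA X p q + (8 * of_nat l - 8) * XD X p q"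
proof -
  have s: "supp l X" using X by (rule gB_supp)
  show ?thesis
  proof (cases p)
    case Z then show ?thesis using s X gB_rels[OF X] by (cases q) (auto simp: GB2_def root_simps XA_def XH_def XD_def entry_simps supp0'[OF s] supp0[OF s] sum_if_const zif sum_negf algebra_simps)
  next
    case (P a) then show ?thesis using s X gB_rels[OF X] gB_rel[OF X, of p q] gB_rel[OF X, of "dual p" "dual q"] gB_rel[OF X, of "dual p" q] gB_rel[OF X, of p "dual q"] by (cases q) (auto simp: GB2_def root_simps XA_def XH_def XD_def entry_simps supp0'[OF s] supp0[OF s] sum_if_const zif sum_negf algebra_simps)
  next
    case (M a) then show ?thesis using s X gB_rels[OF X] gB_rel[OF X, of p q] gB_rel[OF X, of "dual p" "dual q"] gB_rel[OF X, of "dual p" q] gB_rel[OF X, of p "dual q"] by (cases q) (auto simp: GB2_def root_simps XA_def XH_def XD_def entry_simps supp0'[OF s] supp0[OF s] sum_if_const zif sum_negf algebra_simps)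
  qed
qed

lemma B2diag: assumes X: "X \<in> gB l"
  shows "(\<Sum>i\<in>{1..l}. GB2 l X i i p q) = 2 * XA X p q + 4 * XD X p q - 4 * XH X p q"
proof -
  have s: "supp l X" using X by (rule gB_supp)
  show ?thesis
  proof (cases p)
    case Z then show ?thesis using s X gB_rels[OF X] by (cases q) (auto simp: GB2_def root_simps XA_def XH_def XD_def entry_simps supp0'[OF s] supp0[OF s] sum_if_const zif sum_negf algebra_simps)
  next
    case (P a) then show ?thesis using s X gB_rels[OF X] gB_rel[OF X, of p q] gB_rel[OF X, of "dual p" "dual q"] gB_rel[OF X, of "dual p" q] gB_rel[OF X, of p "dual q"] by (cases q) (auto simp: GB2_def root_simps XA_def XH_def XD_def entry_simps supp0'[OF s] supp0[OF s] sum_if_const zif sum_negf algebra_simps)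
  next
    case (M a) then show ?thesis using s X gB_rels[OF X] gB_rel[OF X, of p q] gB_rel[OF X, of "dual p" "dual q"] gB_rel[OF X, of "dual p" q] gB_rel[OF X, of p "dual q"] by (cases q) (auto simp: GB2_def root_simps XA_def XH_def XD_def entry_simps supp0'[OF s] supp0[OF s] sum_if_const zif sum_negf algebra_simps)
  qed
qed

lemma nform_scale: "nform l X (\<lambda>p q. c * E p q) = c * nform l X E"
  by (simp add: nform_def mmul_def sum_distrib_left algebra_simps)
lemma comm_scale1: "comm l C (\<lambda>p q. c * E p q) = (\<lambda>p q. c * comm l C E p q)"
  by (simp add: comm_def mmul_def sum_distrib_left algebra_simps)
lemma comm_scale2: "comm l (\<lambda>p q. c * E p q) C = (\<lambda>p q. c * comm l E C p q)"
  by (simp add: comm_def mmul_def sum_distrib_left algebra_simps)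

lemma C1: assumes X: "X \<in> gB l"
  shows "(\<Sum>i\<in>{1..l}. nform l X (h_short l i) * h_short l i p q) = 4 * XH X p q"
proof -
  have "(\<Sum>i\<in>{1..l}. nform l X (h_short l i) * h_short l i p q) = (\<Sum>i\<in>{1..l}. 4 * (nform l X (W l (P i) (M i)) * W l (P i) (M i) p q))"
    by (intro sum.cong) (simp_all add: h_short_eq nform_scale)
  also have "\<dots> = 4 * XH X p q"
  proof -
  have s: "supp l X" using X by (rule gB_supp)
  show ?thesis
  proof (cases p)
    case Z then show ?thesis using s X gB_rels[OF X] by (cases q) (auto simp: XA_def XH_def XD_def entry_simps supp0'[OF s] supp0[OF s] sum_if_const zif sum_negf algebra_simps)
  next
    case (P a) then show ?thesis using s X gB_rels[OF X] gB_rel[OF X, of p q] gB_rel[OF X, of "dual p" "dual q"] gB_rel[OF X, of "dual p" q] gB_rel[OF X, of p "dual q"] by (cases q) (auto simp: XA_def XH_def XD_def entry_simps supp0'[OF s] supp0[OF s] sum_if_const zif sum_negf algebra_simps)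
  next
    case (M a) then show ?thesis using s X gB_rels[OF X] gB_rel[OF X, of p q] gB_rel[OF X, of "dual p" "dual q"] gB_rel[OF X, of "dual p" q] gB_rel[OF X, of p "dual q"] by (cases q) (auto simp: XA_def XH_def XD_def entry_simps supp0'[OF s] supp0[OF s] sum_if_const zif sum_negf algebra_simps)
  qed
qed
  finally show ?thesis .
qed

lemma C2: assumes X: "X \<in> gB l"
  shows "(\<Sum>i\<in>{1..l}. comm l (comm l X (h_short l i)) (h_short l i) p q) = 4 * XA X p q + 8 * XD X p q - 8 * XH X p q"
proof -
  have "(\<Sum>i\<in>{1..l}. comm l (comm l X (h_short l i)) (h_short l i) p q) = (\<Sum>i\<in>{1..l}. 4 * comm l (comm l X (W l (P i) (M i))) (W l (P i) (M i)) p q)"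
    by (intro sum.cong) (simp_all add: h_short_eq comm_scale1 comm_scale2)
  also have "\<dots> = 4 * XA X p q + 8 * XD X p q - 8 * XH X p q"
  proof -
  have s: "supp l X" using X by (rule gB_supp)
  show ?thesis
  proof (cases p)
    case Z then show ?thesis using s X gB_rels[OF X] by (cases q) (auto simp: XA_def XH_def XD_def entry_simps supp0'[OF s] supp0[OF s] sum_if_const zif sum_negf algebra_simps)
  next
    case (P a) then show ?thesis using s X gB_rels[OF X] gB_rel[OF X, of p q] gB_rel[OF X, of "dual p" "dual q"] gB_rel[OF X, of "dual p" q] gB_rel[OF X, of p "dual q"] by (cases q) (auto simp: XA_def XH_def XD_def entry_simps supp0'[OF s] supp0[OF s] sum_if_const zif sum_negf algebra_simps)
  next
    case (M a) then show ?thesis using s X gB_rels[OF X] gB_rel[OF X, of p q] gB_rel[OF X, of "dual p" "dual q"] gB_rel[OF X, of "dual p" q] gB_rel[OF X, of p "dual q"] by (cases q) (auto simp: XA_def XH_def XD_def entry_simps supp0'[OF s] supp0[OF s] sum_if_const zif sum_negf algebra_simps)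
  qed
qed
  finally show ?thesis .
qed


lemma gB_iff: "X \<in> gB l \<longleftrightarrow> supp l X \<and> (\<forall>p\<in>Jl l. \<forall>q\<in>Jl l. bf q * X (dual q) p + bf p * X (dual p) q = 0)"
proof -
  have "\<And>p q. p \<in> Jl l \<Longrightarrow> q \<in> Jl l \<Longrightarrow>
     (\<Sum>r\<in>Jl l. X r p * Bm r q) + (\<Sum>r\<in>Jl l. Bm p r * X r q) = bf q * X (dual q) p + bf p * X (dual p) q"
    by (simp add: sum_Bm_left sum_Bm_right sum_Bm_left2 sum_Bm_right2 mult.commute)
  then show ?thesis by (auto simp: gB_def supp_def)
qed

lemma dual_eq: "dual a = b \<longleftrightarrow> a = dual b" by (cases a; cases b) auto

lemma bf_dual[simp]: "bf (dual r) = bf r" by (cases r) auto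
lemma dual_dual[simp]: "dual (dual r) = r" by (cases r) auto
lemma sum_dual: "(\<Sum>r\<in>Jl l. g r) = (\<Sum>r\<in>Jl l. g (dual r))"
  by (rule sum.reindex_bij_witness[of _ dual dual]) auto

lemma bf_sq: "bf r * bf r \<noteq> 0" by (cases r) auto
lemma bf_nz[simp]: "bf r \<noteq> 0" by (cases r) auto

lemma gB_prod_rel: assumes X: "X \<in> gB l" and Y: "Y \<in> gB l" and p: "p \<in> Jl l" and q: "q \<in> Jl l"
  shows "bf q * mmul l X Y (dual q) p = bf p * mmul l Y X (dual p) q"
proof -
  have rX: "\<And>a b. a \<in> Jl l \<Longrightarrow> b \<in> Jl l \<Longrightarrow> bf b * X (dual b) a = - (bf a * X (dual a) b)" by (rule gB_rel[OF X])
  have rY: "\<And>a b. a \<in> Jl l \<Longrightarrow> b \<in> Jl l \<Longrightarrow> bf b * Y (dual b) a = - (bf a * Y (dual a) b)" by (rule gB_rel[OF Y])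
  have "bf q * mmul l X Y (dual q) p = (\<Sum>r\<in>Jl l. (bf q * X (dual q) r) * Y r p)"
    by (simp add: mmul_def sum_distrib_left mult.assoc)
  also have "\<dots> = (\<Sum>r\<in>Jl l. - (bf r * X (dual r) q) * Y r p)"
    apply (rule sum.cong[OF refl]) subgoal for r using rX[of r q] q by simp done
  also have "\<dots> = (\<Sum>r\<in>Jl l. - (bf r * X r q) * Y (dual r) p)"
    by (subst sum_dual) simp
  also have "\<dots> = (\<Sum>r\<in>Jl l. X r q * (- (bf r * Y (dual r) p)))"
    by (intro sum.cong refl) (simp add: algebra_simps)
  also have "\<dots> = (\<Sum>r\<in>Jl l. X r q * (bf p * Y (dual p) r))"
    apply (rule sum.cong[OF refl]) subgoal for r using rY[of p r] p by simp done
  also have "\<dots> = bf p * mmul l Y X (dual p) q"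
    by (simp add: mmul_def sum_distrib_left algebra_simps)
  finally show ?thesis .
qed

lemma gB_comm: assumes X: "X \<in> gB l" and Y: "Y \<in> gB l" shows "comm l X Y \<in> gB l"
proof -
  have s: "supp l (comm l X Y)" by (rule supp_comm[OF gB_supp[OF X] gB_supp[OF Y]])
  show ?thesis unfolding gB_iff
  proof (intro conjI s ballI)
    fix p q assume p: "p \<in> Jl l" and q: "q \<in> Jl l"
    show "bf q * comm l X Y (dual q) p + bf p * comm l X Y (dual p) q = 0"
      using gB_prod_rel[OF X Y p q] gB_prod_rel[OF Y X p q]
      by (simp add: comm_def algebra_simps)
  qed
qed

lemma gB_mlin: assumes X: "X \<in> gB l" and Y: "Y \<in> gB l" shows "mlin a X b Y \<in> gB l"
proof -
  have s: "supp l (mlin a X b Y)" using gB_supp[OF X] gB_supp[OF Y] by (simp add: supp_def mlin_def)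
  show ?thesis unfolding gB_iff
  proof (intro conjI s ballI)
    fix p q assume p: "p \<in> Jl l" and q: "q \<in> Jl l"
    show "bf q * mlin a X b Y (dual q) p + bf p * mlin a X b Y (dual p) q = 0"
      using gB_rel[OF X p q] gB_rel[OF Y p q]
      by (simp add: mlin_def algebra_simps)
  qed
qed

lemma gB_W: assumes "s \<in> Jl l" "t \<in> Jl l" shows "W l s t \<in> gB l"
  unfolding gB_iff
proof (intro conjI supp_W assms ballI)
  fix p q assume p: "p \<in> Jl l" and q: "q \<in> Jl l"
  show "bf q * W l s t (dual q) p + bf p * W l s t (dual p) q = 0"
    using assms p q by (auto simp: W_entry Bm_eq dual_eq)
qed

lemma gB_zero: "(\<lambda>p q. 0) \<in> gB l" by (simp add: gB_def)

lemma gB_short: "1 \<le> i \<Longrightarrow> i \<le> l \<Longrightarrow> e_short l i \<in> gB l"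
   "1 \<le> i \<Longrightarrow> i \<le> l \<Longrightarrow> f_short l i \<in> gB l"
   "1 \<le> i \<Longrightarrow> i \<le> l \<Longrightarrow> h_short l i \<in> gB l"
  by (auto simp: e_short_def f_short_def h_short_def intro!: gB_W gB_comm)

lemma gB_root: "r \<in> posD l \<Longrightarrow> e_root l r \<in> gB l" "r \<in> posD l \<Longrightarrow> f_root l r \<in> gB l"
  by (auto simp: posD_def e_root_def f_root_def root_simps intro!: gB_W)


definition Qm :: "nat \<Rightarrow> complex \<Rightarrow> mat \<Rightarrow> mat \<Rightarrow> mat \<Rightarrow> mat" where
  "Qm l k X Y Zm = (\<lambda>p q. comm l (comm l X Y) Zm p q + (k * nform l X Zm * Y p q + k * nform l X Y * Zm p q))"

lemma A1: assumes X: "X \<in> gB l"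
  shows "(\<Sum>i\<in>{1..l}. nform l X (f_short l i) * e_short l i p q + nform l X (e_short l i) * f_short l i p q)
     = 2 * XA X p q"
proof -
  have s: "supp l X" using X by (rule gB_supp)
  show ?thesis
  proof (cases p)
    case Z then show ?thesis using s X gB_rels[OF X] by (cases q) (auto simp: XA_def XH_def XD_def entry_simps supp0'[OF s] supp0[OF s] sum_if_const zif sum_negf algebra_simps)
  next
    case (P a) then show ?thesis using s X gB_rels[OF X] gB_rel[OF X, of p q] gB_rel[OF X, of "dual p" "dual q"] gB_rel[OF X, of "dual p" q] gB_rel[OF X, of p "dual q"] by (cases q) (auto simp: XA_def XH_def XD_def entry_simps supp0'[OF s] supp0[OF s] sum_if_const zif sum_negf algebra_simps)
  next
    case (M a) then show ?thesis using s X gB_rels[OF X] gB_rel[OF X, of p q] gB_rel[OF X, of "dual p" "dual q"] gB_rel[OF X, of "dual p" q] gB_rel[OF X, of p "dual q"] by (cases q) (auto simp: XA_def XH_def XD_def entry_simps supp0'[OF s] supp0[OF s] sum_if_const zif sum_negf algebra_simps)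
  qed
qed

lemma pair_Q: "Qm l k X Y Zm p q + Qm l k X Zm Y p q =
   (comm l (comm l X Y) Zm p q + comm l (comm l X Zm) Y p q) + 2 * k * (nform l X Zm * Y p q + nform l X Y * Zm p q)"
  by (simp add: Qm_def algebra_simps)

lemma TT_zero: assumes X: "X \<in> gB l" and k: "k = - of_nat l + 3/2"
  shows "(2 * of_nat l - 1) * (\<Sum>i\<in>{1..l}. Qm l k X (e_short l i) (f_short l i) p q + Qm l k X (f_short l i) (e_short l i) p q)
    - (4 * (\<Sum>r\<in>posD l. Qm l k X (e_root l r) (f_root l r) p q + Qm l k X (f_root l r) (e_root l r) p q)
       + (\<Sum>i\<in>{1..l}. Qm l k X (h_short l i) (h_short l i) p q)) = 0"
proof -
  have S: "(\<Sum>i\<in>{1..l}. Qm l k X (e_short l i) (f_short l i) p q + Qm l k X (f_short l i) (e_short l i) p q)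
     = (2 * (2 * of_nat l - 1) * XA X p q + 4 * XD X p q) + 2 * k * (2 * XA X p q)"
    by (simp only: pair_Q sum.distrib sum_distrib_left[symmetric] A1[OF X, unfolded sum.distrib] A2[OF X, unfolded sum.distrib])
  have G: "\<And>i j. Qm l k X (e_root l (True, i, j)) (f_root l (True, i, j)) p q + Qm l k X (f_root l (True, i, j)) (e_root l (True, i, j)) p q
     + (Qm l k X (e_root l (False, i, j)) (f_root l (False, i, j)) p q + Qm l k X (f_root l (False, i, j)) (e_root l (False, i, j)) p q)
     = GB2 l X i j p q + 2 * k * GB1 l X i j p q"
    by (simp add: pair_Q GB1_def GB2_def e_root_def f_root_def algebra_simps)
  have L: "(\<Sum>r\<in>posD l. Qm l k X (e_root l r) (f_root l r) p q + Qm l k X (f_root l r) (e_root l r) p q)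
     = ((((4 * of_nat l - 2) * XA X p q + (8 * of_nat l - 8) * XD X p q) + 2 * k * (2 * XD X p q))
        - ((2 * XA X p q + 4 * XD X p q - 4 * XH X p q) + 2 * k * (2 * XH X p q))) / 2"
  proof -
    have "(\<Sum>r\<in>posD l. Qm l k X (e_root l r) (f_root l r) p q + Qm l k X (f_root l r) (e_root l r) p q)
       = (\<Sum>i\<in>{1..l}. \<Sum>j\<in>{Suc i..l}. GB2 l X i j p q + 2 * k * GB1 l X i j p q)"
      by (simp only: sum_posD G)
    also have "\<dots> = ((\<Sum>i\<in>{1..l}. \<Sum>j\<in>{1..l}. GB2 l X i j p q + 2 * k * GB1 l X i j p q)
        - (\<Sum>i\<in>{1..l}. GB2 l X i i p q + 2 * k * GB1 l X i i p q)) / 2"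
      by (rule sym_half) (simp add: GB1_sym[of l X] GB2_sym[of l X])
    also have "\<dots> = ((((4 * of_nat l - 2) * XA X p q + (8 * of_nat l - 8) * XD X p q) + 2 * k * (2 * XD X p q))
        - ((2 * XA X p q + 4 * XD X p q - 4 * XH X p q) + 2 * k * (2 * XH X p q))) / 2"
      by (simp only: sum.distrib sum_distrib_left[symmetric] B1full[OF X] B2full[OF X] B1diag[OF X] B2diag[OF X])
    finally show ?thesis .
  qed
  have H: "(\<Sum>i\<in>{1..l}. Qm l k X (h_short l i) (h_short l i) p q)
     = (4 * XA X p q + 8 * XD X p q - 8 * XH X p q) + 2 * k * (4 * XH X p q)"
  proof -
    have "(\<Sum>i\<in>{1..l}. Qm l k X (h_short l i) (h_short l i) p q)
        = (\<Sum>i\<in>{1..l}. comm l (comm l X (h_short l i)) (h_short l i) p q) + 2 * k * (\<Sum>i\<in>{1..l}. nform l X (h_short l i) * h_short l i p q)"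
      by (simp add: Qm_def sum.distrib sum_distrib_left algebra_simps)
    then show ?thesis by (simp only: C1[OF X] C2[OF X])
  qed
  show ?thesis by (simp only: S L H) (simp add: k field_simps)
qed


lemma gB_sum: "finite S \<Longrightarrow> (\<And>i. i \<in> S \<Longrightarrow> F i \<in> gB l) \<Longrightarrow> (\<lambda>p q. \<Sum>i\<in>S. F i p q) \<in> gB l"
proof (induction S rule: finite_induct)
  case empty then show ?case by (simp add: gB_zero)
next
  case (insert x S)
  have "mlin 1 (F x) 1 (\<lambda>p q. \<Sum>i\<in>S. F i p q) \<in> gB l"
    using insert by (intro gB_mlin) auto
  then show ?case using insert by (simp add: mlin_def)
qed

lemma gB_scale: "X \<in> gB l \<Longrightarrow> (\<lambda>p q. c * X p q) \<in> gB l"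
  using gB_mlin[of X l X c 0] by (simp add: mlin_def)

lemma gB_add: "X \<in> gB l \<Longrightarrow> Y \<in> gB l \<Longrightarrow> (\<lambda>p q. X p q + Y p q) \<in> gB l"
  using gB_mlin[of X l Y 1 1] by (simp add: mlin_def)

locale svm = module sm for sm :: "complex \<Rightarrow> 'v::ab_group_add \<Rightarrow> 'v" +
  fixes l :: nat and k :: complex and \<rho> :: "mat \<Rightarrow> int \<Rightarrow> 'v \<Rightarrow> 'v" and D :: "'v \<Rightarrow> 'v" and vac :: 'v
  assumes rho_add: "X \<in> gB l \<Longrightarrow> \<rho> X n (v + w) = \<rho> X n v + \<rho> X n w"
  and rho_sm: "X \<in> gB l \<Longrightarrow> \<rho> X n (sm c v) = sm c (\<rho> X n v)"
  and rho_lin: "X \<in> gB l \<Longrightarrow> Y \<in> gB l \<Longrightarrow> \<rho> (mlin a X b Y) n v = sm a (\<rho> X n v) + sm b (\<rho> Y n v)"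
  and rho_comm: "X \<in> gB l \<Longrightarrow> Y \<in> gB l \<Longrightarrow> \<rho> X m (\<rho> Y n v) - \<rho> Y n (\<rho> X m v) =
        \<rho> (comm l X Y) (m + n) v + sm (if m + n = 0 then of_int m * k * nform l X Y else 0) v"
  and D_add: "D (v + w) = D v + D w"
  and D_sm: "D (sm c v) = sm c (D v)"
  and D_rho: "X \<in> gB l \<Longrightarrow> D (\<rho> X n v) = \<rho> X n (D v) - sm (of_int n) (\<rho> X n v)"
  and vac_nz: "vac \<noteq> 0" and D_vac: "D vac = 0"
  and vac_ann: "X \<in> gB l \<Longrightarrow> n \<ge> 0 \<Longrightarrow> \<rho> X n vac = 0"
  and simple: "0 \<in> U \<Longrightarrow> (\<forall>v\<in>U. \<forall>w\<in>U. v + w \<in> U) \<Longrightarrow> (\<forall>c. \<forall>v\<in>U. sm c v \<in> U) \<Longrightarrow>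
          (\<forall>X\<in>gB l. \<forall>n. \<forall>v\<in>U. \<rho> X n v \<in> U) \<Longrightarrow> (\<forall>v\<in>U. D v \<in> U) \<Longrightarrow>
          U \<noteq> {0} \<Longrightarrow> U = UNIV"
begin

lemma rho_zero[simp]: "X \<in> gB l \<Longrightarrow> \<rho> X n 0 = 0"
  using rho_add[of X n 0 0] by simp
lemma rho_minus: "X \<in> gB l \<Longrightarrow> \<rho> X n (- v) = - \<rho> X n v"
  using rho_add[of X n v "- v"] by (metis minus_unique add.right_inverse rho_zero)
lemma rho_diff: "X \<in> gB l \<Longrightarrow> \<rho> X n (v - w) = \<rho> X n v - \<rho> X n w"
  using rho_add[of X n v "- w"] rho_minus[of X n w] by simp
lemma rho_sum: "X \<in> gB l \<Longrightarrow> \<rho> X n (\<Sum>i\<in>S. f i) = (\<Sum>i\<in>S. \<rho> X n (f i))"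
  by (induction S rule: infinite_finite_induct) (simp_all add: rho_add)

lemma D_zero[simp]: "D 0 = 0"
  using D_add[of 0 0] by simp
lemma D_minus: "D (- v) = - D v"
  using D_add[of v "- v"] by (metis minus_unique add.right_inverse D_zero)
lemma D_diff: "D (v - w) = D v - D w"
  using D_add[of v "- w"] D_minus[of w] by simp
lemma D_sum: "D (\<Sum>i\<in>S. f i) = (\<Sum>i\<in>S. D (f i))"
  by (induction S rule: infinite_finite_induct) (simp_all add: D_add)

lemma rho_scale_mat: "X \<in> gB l \<Longrightarrow> \<rho> (\<lambda>p q. c * X p q) n v = sm c (\<rho> X n v)"
  using rho_lin[of X X c 0 n v] by (simp add: mlin_def)
lemma rho_add_mat: "X \<in> gB l \<Longrightarrow> Y \<in> gB l \<Longrightarrow> \<rho> (\<lambda>p q. X p q + Y p q) n v = \<rho> X n v + \<rho> Y n v"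
  using rho_lin[of X Y 1 1 n v] by (simp add: mlin_def)
lemma rho_zero_mat: "\<rho> (\<lambda>p q. 0) n v = 0"
  using rho_lin[of "\<lambda>p q. 0" "\<lambda>p q. 0" 0 0 n v] by (simp add: mlin_def gB_zero)
lemma rho_sum_mat: "finite S \<Longrightarrow> (\<And>i. i \<in> S \<Longrightarrow> F i \<in> gB l) \<Longrightarrow>
   \<rho> (\<lambda>p q. \<Sum>i\<in>S. F i p q) n v = (\<Sum>i\<in>S. \<rho> (F i) n v)"
proof (induction S rule: finite_induct)
  case empty then show ?case by (simp add: rho_zero_mat)
next
  case (insert x S)
  then show ?case using rho_add_mat[of "F x" "\<lambda>p q. \<Sum>i\<in>S. F i p q" n v] gB_sum[of S F l] by simp
qed

lemma comm_vac: "X \<in> gB l \<Longrightarrow> Y \<in> gB l \<Longrightarrow> m \<ge> 0 \<Longrightarrow>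
   \<rho> X m (\<rho> Y n vac) = \<rho> Y n (\<rho> X m vac) + \<rho> (comm l X Y) (m + n) vac + sm (if m + n = 0 then of_int m * k * nform l X Y else 0) vac"
  using rho_comm[of X Y m n vac] by (simp add: diff_eq_eq ac_simps)

lemma gB_Q: "X \<in> gB l \<Longrightarrow> Y \<in> gB l \<Longrightarrow> Zm \<in> gB l \<Longrightarrow> Qm l k X Y Zm \<in> gB l"
proof -
  assume X: "X \<in> gB l" and Y: "Y \<in> gB l" and Zm: "Zm \<in> gB l"
  show ?thesis unfolding Qm_def
    by (rule gB_add[OF gB_comm[OF gB_comm[OF X Y] Zm] gB_add[OF gB_scale[OF Y] gB_scale[OF Zm]]])
qed

lemma K1: assumes X: "X \<in> gB l" and Y: "Y \<in> gB l" and Zm: "Zm \<in> gB l"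
  shows "\<rho> X 1 (\<rho> Y (-1) (\<rho> Zm (-1) vac)) = \<rho> (Qm l k X Y Zm) (-1) vac"
proof -
  have XY: "comm l X Y \<in> gB l" by (rule gB_comm[OF X Y])
  have a: "\<rho> X 1 (\<rho> Zm (-1) vac) = sm (k * nform l X Zm) vac"
    using comm_vac[OF X Zm, of 1 "-1"] vac_ann[OF X] vac_ann[OF gB_comm[OF X Zm]] Zm by simp
  have b: "\<rho> (comm l X Y) 0 (\<rho> Zm (-1) vac) = \<rho> (comm l (comm l X Y) Zm) (-1) vac"
    using comm_vac[OF XY Zm, of 0 "-1"] vac_ann[OF XY] Zm by simp
  have "\<rho> X 1 (\<rho> Y (-1) (\<rho> Zm (-1) vac)) = \<rho> Y (-1) (\<rho> X 1 (\<rho> Zm (-1) vac)) + \<rho> (comm l X Y) 0 (\<rho> Zm (-1) vac)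
      + sm (k * nform l X Y) (\<rho> Zm (-1) vac)"
    using rho_comm[OF X Y, of 1 "-1" "\<rho> Zm (-1) vac"] by (simp add: diff_eq_eq ac_simps)
  also have "\<dots> = \<rho> (comm l (comm l X Y) Zm) (-1) vac + (sm (k * nform l X Zm) (\<rho> Y (-1) vac) + sm (k * nform l X Y) (\<rho> Zm (-1) vac))"
    by (simp only: a b rho_sm[OF Y]) (simp add: ac_simps)
  also have "\<dots> = \<rho> (Qm l k X Y Zm) (-1) vac"
  proof -
    have g1: "(\<lambda>p q. k * nform l X Zm * Y p q) \<in> gB l" by (rule gB_scale[OF Y])
    have g2: "(\<lambda>p q. k * nform l X Y * Zm p q) \<in> gB l" by (rule gB_scale[OF Zm])
    have g3: "(\<lambda>p q. k * nform l X Zm * Y p q + k * nform l X Y * Zm p q) \<in> gB l" by (rule gB_add[OF g1 g2])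
    have "\<rho> (Qm l k X Y Zm) (-1) vac = \<rho> (comm l (comm l X Y) Zm) (-1) vac + \<rho> (\<lambda>p q. k * nform l X Zm * Y p q + k * nform l X Y * Zm p q) (-1) vac"
      unfolding Qm_def by (rule rho_add_mat[OF gB_comm[OF XY Zm] g3])
    also have "\<rho> (\<lambda>p q. k * nform l X Zm * Y p q + k * nform l X Y * Zm p q) (-1) vac
       = \<rho> (\<lambda>p q. k * nform l X Zm * Y p q) (-1) vac + \<rho> (\<lambda>p q. k * nform l X Y * Zm p q) (-1) vac"
      by (rule rho_add_mat[OF g1 g2])
    also have "\<rho> (\<lambda>p q. k * nform l X Zm * Y p q) (-1) vac = sm (k * nform l X Zm) (\<rho> Y (-1) vac)"
      by (rule rho_scale_mat[OF Y])
    also have "\<rho> (\<lambda>p q. k * nform l X Y * Zm p q) (-1) vac = sm (k * nform l X Y) (\<rho> Zm (-1) vac)"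
      by (rule rho_scale_mat[OF Zm])
    finally show ?thesis by simp
  qed
  finally show ?thesis .
qed

lemma K2: assumes X: "X \<in> gB l" and Y: "Y \<in> gB l" and Zm: "Zm \<in> gB l"
  shows "\<rho> X 2 (\<rho> Y (-1) (\<rho> Zm (-1) vac)) = sm (k * nform l (comm l X Y) Zm) vac"
proof -
  have XY: "comm l X Y \<in> gB l" by (rule gB_comm[OF X Y])
  have a: "\<rho> X 2 (\<rho> Zm (-1) vac) = 0"
    using comm_vac[OF X Zm, of 2 "-1"] vac_ann[OF X] vac_ann[OF gB_comm[OF X Zm]] Zm by simp
  have b: "\<rho> (comm l X Y) 1 (\<rho> Zm (-1) vac) = sm (k * nform l (comm l X Y) Zm) vac"
    using comm_vac[OF XY Zm, of 1 "-1"] vac_ann[OF XY] vac_ann[OF gB_comm[OF XY Zm]] Zm by simp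
  have "\<rho> X 2 (\<rho> Y (-1) (\<rho> Zm (-1) vac)) = \<rho> Y (-1) (\<rho> X 2 (\<rho> Zm (-1) vac)) + \<rho> (comm l X Y) 1 (\<rho> Zm (-1) vac)"
    using rho_comm[OF X Y, of 2 "-1" "\<rho> Zm (-1) vac"] by (simp add: diff_eq_eq ac_simps)
  then show ?thesis using a b Y by simp
qed

lemma K3: assumes X: "X \<in> gB l" and Y: "Y \<in> gB l" and Zm: "Zm \<in> gB l" and n: "n \<ge> 3"
  shows "\<rho> X n (\<rho> Y (-1) (\<rho> Zm (-1) vac)) = 0"
proof -
  have XY: "comm l X Y \<in> gB l" by (rule gB_comm[OF X Y])
  have a: "\<rho> X n (\<rho> Zm (-1) vac) = 0"
    using comm_vac[OF X Zm, of n "-1"] vac_ann[OF X] vac_ann[OF gB_comm[OF X Zm]] Zm n by simp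
  have b: "\<rho> (comm l X Y) (n - 1) (\<rho> Zm (-1) vac) = 0"
    using comm_vac[OF XY Zm, of "n - 1" "-1"] vac_ann[OF XY] vac_ann[OF gB_comm[OF XY Zm]] Zm n by simp
  have "\<rho> X n (\<rho> Y (-1) (\<rho> Zm (-1) vac)) = \<rho> Y (-1) (\<rho> X n (\<rho> Zm (-1) vac)) + \<rho> (comm l X Y) (n - 1) (\<rho> Zm (-1) vac)"
    using rho_comm[OF X Y, of n "-1" "\<rho> Zm (-1) vac"] n by (simp add: diff_eq_eq ac_simps)
  then show ?thesis using a b Y by simp
qed

lemma D_pv: assumes Y: "Y \<in> gB l" and Zm: "Zm \<in> gB l"
  shows "D (\<rho> Y (-1) (\<rho> Zm (-1) vac)) = sm 2 (\<rho> Y (-1) (\<rho> Zm (-1) vac))"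
proof -
  have "D (\<rho> Zm (-1) vac) = \<rho> Zm (-1) vac" using D_rho[OF Zm, of "-1" vac] D_vac Zm by simp
  then have "D (\<rho> Y (-1) (\<rho> Zm (-1) vac)) = \<rho> Y (-1) (\<rho> Zm (-1) vac) + \<rho> Y (-1) (\<rho> Zm (-1) vac)"
    using D_rho[OF Y, of "-1" "\<rho> Zm (-1) vac"] by simp
  moreover have "sm 2 x = x + x" for x
    using scale_left_distrib[of 1 1 x] by simp
  ultimately show ?thesis by simp
qed

end

lemma tr_cyc: "(\<Sum>p\<in>Jl l. mmul l (mmul l A B) C p p) = (\<Sum>p\<in>Jl l. mmul l (mmul l C A) B p p)"
proof -
  have "(\<Sum>p\<in>Jl l. mmul l (mmul l A B) C p p) = (\<Sum>p\<in>Jl l. \<Sum>r\<in>Jl l. \<Sum>s\<in>Jl l. A p s * B s r * C r p)"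
    by (simp add: mmul_def sum_distrib_right)
  also have "\<dots> = (\<Sum>r\<in>Jl l. \<Sum>p\<in>Jl l. \<Sum>s\<in>Jl l. A p s * B s r * C r p)"
    by (rule sum.swap)
  also have "\<dots> = (\<Sum>r\<in>Jl l. \<Sum>p\<in>Jl l. \<Sum>s\<in>Jl l. C r p * A p s * B s r)"
    by (simp add: mult_ac)
  also have "\<dots> = (\<Sum>r\<in>Jl l. \<Sum>s\<in>Jl l. \<Sum>p\<in>Jl l. C r p * A p s * B s r)"
    by (rule sum.cong[OF refl], rule sum.swap)
  also have "\<dots> = (\<Sum>p\<in>Jl l. mmul l (mmul l C A) B p p)"
    by (simp add: mmul_def sum_distrib_right sum_distrib_left)
  finally show ?thesis .
qed

lemma nform_comm_pair: "nform l (comm l X Y) Zm + nform l (comm l X Zm) Y = 0"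
proof -
  have t: "\<And>A B C. (\<Sum>p\<in>Jl l. mmul l (comm l A B) C p p) = (\<Sum>p\<in>Jl l. mmul l (mmul l A B) C p p) - (\<Sum>p\<in>Jl l. mmul l (mmul l B A) C p p)"
    by (simp add: comm_def mmul_def sum_subtractf left_diff_distrib)
  show ?thesis unfolding nform_def t
    using tr_cyc[of l X Y Zm] tr_cyc[of l Y X Zm] tr_cyc[of l X Zm Y] tr_cyc[of l Zm X Y] tr_cyc[of l Zm Y X]
    by (simp add: field_simps)
qed

context svm
begin

lemma rho_diff_mat: "A \<in> gB l \<Longrightarrow> B \<in> gB l \<Longrightarrow> \<rho> (\<lambda>p q. A p q - B p q) n v = \<rho> A n v - \<rho> B n v"
  using rho_lin[of A B 1 "-1" n v] by (simp add: mlin_def)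

lemma rho_pair_sum: "finite S \<Longrightarrow> (\<And>i. i \<in> S \<Longrightarrow> F i \<in> gB l) \<Longrightarrow> (\<And>i. i \<in> S \<Longrightarrow> G i \<in> gB l) \<Longrightarrow>
  (\<Sum>i\<in>S. \<rho> (F i) n v + \<rho> (G i) n v) = \<rho> (\<lambda>p q. \<Sum>i\<in>S. F i p q + G i p q) n v"
  by (subst rho_sum_mat) (auto intro!: gB_add sum.cong simp: rho_add_mat)

definition pv :: "mat \<Rightarrow> mat \<Rightarrow> 'v" where "pv Y Zm = \<rho> Y (-1) (\<rho> Zm (-1) vac)"

definition Sv where "Sv = (\<Sum>i\<in>{1..l}. pv (e_short l i) (f_short l i) + pv (f_short l i) (e_short l i))"
definition Lv where "Lv = (\<Sum>r\<in>posD l. pv (e_root l r) (f_root l r) + pv (f_root l r) (e_root l r))"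
definition Hv where "Hv = (\<Sum>i\<in>{1..l}. pv (h_short l i) (h_short l i))"
definition RR where "RR = sm (2 * of_nat l - 1) Sv - (sm 4 Lv + Hv)"

lemma finite_posD: "finite (posD l)"
proof -
  have "posD l \<subseteq> UNIV \<times> ({1..l} \<times> {1..l})" by (auto simp: posD_def)
  then show ?thesis by (rule finite_subset) simp
qed

lemma X1_R: assumes X: "X \<in> gB l" and k: "k = - of_nat l + 3/2"
  shows "\<rho> X 1 RR = 0"
proof -
  define M1 where "M1 = (\<lambda>p q. \<Sum>i\<in>{1..l}. Qm l k X (e_short l i) (f_short l i) p q + Qm l k X (f_short l i) (e_short l i) p q)"
  define M2 where "M2 = (\<lambda>p q. \<Sum>r\<in>posD l. Qm l k X (e_root l r) (f_root l r) p q + Qm l k X (f_root l r) (e_root l r) p q)"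
  define M3 where "M3 = (\<lambda>p q. \<Sum>i\<in>{1..l}. Qm l k X (h_short l i) (h_short l i) p q)"
  have g1: "M1 \<in> gB l" unfolding M1_def by (intro gB_sum gB_add gB_Q X) (auto intro: gB_short)
  have g2: "M2 \<in> gB l" unfolding M2_def by (intro gB_sum gB_add gB_Q X finite_posD) (auto intro: gB_root)
  have g3: "M3 \<in> gB l" unfolding M3_def by (intro gB_sum gB_add gB_Q X) (auto intro: gB_short)
  have s1: "\<rho> X 1 Sv = \<rho> M1 (-1) vac"
  proof -
    have "\<rho> X 1 Sv = (\<Sum>i\<in>{1..l}. \<rho> (Qm l k X (e_short l i) (f_short l i)) (-1) vac + \<rho> (Qm l k X (f_short l i) (e_short l i)) (-1) vac)"
      unfolding Sv_def pv_def using X by (simp add: rho_sum rho_add K1 gB_short)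
    also have "\<dots> = \<rho> M1 (-1) vac" unfolding M1_def
      by (rule rho_pair_sum) (auto intro!: gB_Q X gB_short)
    finally show ?thesis .
  qed
  have s2: "\<rho> X 1 Lv = \<rho> M2 (-1) vac"
  proof -
    have "\<rho> X 1 Lv = (\<Sum>r\<in>posD l. \<rho> (Qm l k X (e_root l r) (f_root l r)) (-1) vac + \<rho> (Qm l k X (f_root l r) (e_root l r)) (-1) vac)"
      unfolding Lv_def pv_def using X by (intro trans[OF rho_sum[OF X]] sum.cong refl) (simp add: rho_add K1 gB_root)
    also have "\<dots> = \<rho> M2 (-1) vac" unfolding M2_def
      by (rule rho_pair_sum) (auto intro!: gB_Q X gB_root finite_posD)
    finally show ?thesis .
  qed
  have s3: "\<rho> X 1 Hv = \<rho> M3 (-1) vac"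
  proof -
    have "\<rho> X 1 Hv = (\<Sum>i\<in>{1..l}. \<rho> (Qm l k X (h_short l i) (h_short l i)) (-1) vac)"
      unfolding Hv_def pv_def using X by (simp add: rho_sum K1 gB_short)
    also have "\<dots> = \<rho> M3 (-1) vac" unfolding M3_def
      by (rule rho_sum_mat[symmetric]) (auto intro!: gB_Q X gB_short)
    finally show ?thesis .
  qed
  have "\<rho> X 1 RR = sm (2 * of_nat l - 1) (\<rho> M1 (-1) vac) - (sm 4 (\<rho> M2 (-1) vac) + \<rho> M3 (-1) vac)"
    unfolding RR_def using X s1 s2 s3 by (simp add: rho_diff rho_add rho_sm)
  also have "\<dots> = \<rho> (\<lambda>p q. (2 * of_nat l - 1) * M1 p q - (4 * M2 p q + M3 p q)) (-1) vac"
    using g1 g2 g3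
    by (simp add: rho_diff_mat rho_add_mat rho_scale_mat gB_scale gB_add)
  also have "(\<lambda>p q. (2 * of_nat l - 1) * M1 p q - (4 * M2 p q + M3 p q)) = (\<lambda>p q. 0)"
    unfolding M1_def M2_def M3_def using TT_zero[OF X k] by simp
  finally show ?thesis by (simp add: rho_zero_mat)
qed

lemma nform_comm_self: "nform l (comm l X Y) Y = 0"
  using nform_comm_pair[of l X Y Y] by simp

lemma X2_pair: "X \<in> gB l \<Longrightarrow> Y \<in> gB l \<Longrightarrow> Zm \<in> gB l \<Longrightarrow> \<rho> X 2 (pv Y Zm + pv Zm Y) = 0"
proof -
  assume X: "X \<in> gB l" and Y: "Y \<in> gB l" and Zm: "Zm \<in> gB l"
  have "\<rho> X 2 (pv Y Zm + pv Zm Y) = sm (k * nform l (comm l X Y) Zm) vac + sm (k * nform l (comm l X Zm) Y) vac"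
    unfolding pv_def using X Y Zm by (simp add: rho_add K2)
  also have "\<dots> = sm (k * (nform l (comm l X Y) Zm + nform l (comm l X Zm) Y)) vac"
    by (simp add: distrib_left scale_left_distrib)
  finally show ?thesis by (simp add: nform_comm_pair)
qed

lemma X2_R: assumes X: "X \<in> gB l" shows "\<rho> X 2 RR = 0"
proof -
  have "\<rho> X 2 Sv = 0" unfolding Sv_def using X
    by (simp add: rho_sum X2_pair gB_short)
  moreover have "\<rho> X 2 Lv = 0" unfolding Lv_def using X
    by (simp add: rho_sum X2_pair gB_root)
  moreover have "\<rho> X 2 Hv = 0" unfolding Hv_def pv_def using X
    by (simp add: rho_sum K2 gB_short nform_comm_self)
  ultimately show ?thesis unfolding RR_def using X by (simp add: rho_diff rho_add rho_sm)
qed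

lemma X3_R: assumes X: "X \<in> gB l" and n: "n \<ge> 3" shows "\<rho> X n RR = 0"
proof -
  have "\<rho> X n Sv = 0" unfolding Sv_def pv_def using X n
    by (simp add: rho_sum rho_add K3 gB_short)
  moreover have "\<rho> X n Lv = 0" unfolding Lv_def pv_def using X n
    by (simp add: rho_sum rho_add K3 gB_root)
  moreover have "\<rho> X n Hv = 0" unfolding Hv_def pv_def using X n
    by (simp add: rho_sum K3 gB_short)
  ultimately show ?thesis unfolding RR_def using X by (simp add: rho_diff rho_add rho_sm)
qed

lemma ann_R: assumes X: "X \<in> gB l" and k: "k = - of_nat l + 3/2" and n: "n > 0"
  shows "\<rho> X n RR = 0"
proof -
  consider "n = 1" | "n = 2" | "n \<ge> 3" using n by linarith
  then show ?thesis using X1_R[OF X k] X2_R[OF X] X3_R[OF X] by cases auto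
qed

lemma D_R: "D RR = sm 2 RR"
proof -
  have pv2: "Y \<in> gB l \<Longrightarrow> Zm \<in> gB l \<Longrightarrow> D (pv Y Zm) = sm 2 (pv Y Zm)" for Y Zm
    unfolding pv_def by (rule D_pv)
  have "D Sv = sm 2 Sv" unfolding Sv_def
    by (simp add: D_sum D_add pv2 gB_short scale_sum_right scale_right_distrib)
  moreover have "D Lv = sm 2 Lv" unfolding Lv_def
    by (simp add: D_sum D_add pv2 gB_root scale_sum_right scale_right_distrib)
  moreover have "D Hv = sm 2 Hv" unfolding Hv_def
    by (simp add: D_sum pv2 gB_short scale_sum_right)
  ultimately show ?thesis unfolding RR_def
    by (simp add: D_diff D_add D_sm scale_right_diff_distrib scale_right_distrib scale_left_commute[of _ 2])
qed

inductive monoR :: "'v \<Rightarrow> bool" where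
  mbase: "monoR RR"
| mstep: "monoR w \<Longrightarrow> X \<in> gB l \<Longrightarrow> n \<le> 0 \<Longrightarrow> monoR (\<rho> X n w)"

definition Sg where "Sg = span {w. monoR w}"

lemma mono_deg: "monoR w \<Longrightarrow> \<exists>d::int. d \<ge> 2 \<and> D w = sm (of_int d) w"
proof (induction rule: monoR.induct)
  case mbase then show ?case using D_R by (intro exI[of _ 2]) simp
next
  case (mstep w X n)
  then obtain d :: int where d: "d \<ge> 2" "D w = sm (of_int d) w" by blast
  have "D (\<rho> X n w) = sm (of_int d) (\<rho> X n w) - sm (of_int n) (\<rho> X n w)"
    using mstep d by (simp add: D_rho rho_sm)
  also have "\<dots> = sm (of_int (d - n)) (\<rho> X n w)" by (simp add: scale_left_diff_distrib)
  finally show ?case using d mstep by (intro exI[of _ "d - n"]) simp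
qed

lemma Sg_base: "monoR w \<Longrightarrow> w \<in> Sg"
  unfolding Sg_def by (rule span_base) simp

lemma span_rho_nonpos: "u \<in> Sg \<Longrightarrow> X \<in> gB l \<Longrightarrow> n \<le> 0 \<Longrightarrow> \<rho> X n u \<in> Sg"
  unfolding Sg_def
proof (induction rule: span_induct_alt)
  case base then show ?case by (simp add: span_zero)
next
  case (step c x y)
  then have "monoR (\<rho> X n x)" by (intro mstep) auto
  then have "\<rho> X n x \<in> span {w. monoR w}" by (intro span_base) simp
  then show ?case using step by (simp add: rho_add rho_sm span_add span_scale)
qed

lemma mono_closed: assumes k: "k = - of_nat l + 3/2"
  shows "monoR w \<Longrightarrow> X \<in> gB l \<Longrightarrow> \<rho> X n w \<in> Sg"
proof (induction w arbitrary: X n rule: monoR.induct)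
  case mbase
  show ?case
  proof (cases "n \<le> 0")
    case True then show ?thesis using mbase by (intro Sg_base mstep monoR.mbase)
  next
    case False then show ?thesis using ann_R[OF mbase k] by (simp add: Sg_def span_zero)
  qed
next
  case (mstep w Y m)
  show ?case
  proof (cases "n \<le> 0")
    case True then show ?thesis using mstep by (intro Sg_base monoR.mstep) (auto intro: monoR.mstep)
  next
    case False
    have e: "\<rho> X n (\<rho> Y m w) = \<rho> Y m (\<rho> X n w) + \<rho> (comm l X Y) (n + m) w
        + sm (if n + m = 0 then of_int n * k * nform l X Y else 0) w"
      using rho_comm[OF mstep.prems mstep.hyps(2), of n m w] by (simp add: diff_eq_eq ac_simps)
    have 1: "\<rho> Y m (\<rho> X n w) \<in> Sg"
      using span_rho_nonpos[OF mstep.IH[OF mstep.prems] mstep.hyps(2,3)] .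
    have 2: "\<rho> (comm l X Y) (n + m) w \<in> Sg"
      using mstep.IH[OF gB_comm[OF mstep.prems mstep.hyps(2)]] .
    have 3: "sm (if n + m = 0 then of_int n * k * nform l X Y else 0) w \<in> Sg"
      using Sg_base[OF mstep.hyps(1)] unfolding Sg_def by (rule span_scale)
    show ?thesis unfolding e using 1 2 3 unfolding Sg_def by (intro span_add)
  qed
qed

lemma span_rho: assumes k: "k = - of_nat l + 3/2"
  shows "u \<in> Sg \<Longrightarrow> X \<in> gB l \<Longrightarrow> \<rho> X n u \<in> Sg"
  unfolding Sg_def
proof (induction rule: span_induct_alt)
  case base then show ?case by (simp add: span_zero)
next
  case (step c x y)
  have "\<rho> X n x \<in> span {w. monoR w}" using mono_closed[OF k, of x X n] step unfolding Sg_def by simp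
  then show ?case using step by (simp add: rho_add rho_sm span_add span_scale)
qed

lemma span_D: "u \<in> Sg \<Longrightarrow> D u \<in> Sg"
  unfolding Sg_def
proof (induction rule: span_induct_alt)
  case base then show ?case by (simp add: span_zero)
next
  case (step c x y)
  obtain d :: int where "D x = sm (of_int d) x" using mono_deg[of x] step by auto
  then have "D x \<in> span {w. monoR w}" using step by (simp add: span_scale span_base)
  then show ?case using step by (simp add: D_add D_sm span_add span_scale)
qed

primrec Pn :: "nat \<Rightarrow> 'v \<Rightarrow> 'v" where
  "Pn 0 u = u"
| "Pn (Suc N) u = D (Pn N u) - sm (of_nat N + 2) (Pn N u)"

lemma Pn_add: "Pn N (u + v) = Pn N u + Pn N v"
  by (induction N) (simp_all add: D_add scale_right_distrib)
lemma Pn_sm: "Pn N (sm c u) = sm c (Pn N u)"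
  by (induction N) (simp_all add: D_sm D_diff scale_right_diff_distrib scale_left_commute[of c] mult.commute)
lemma Pn_zero: "Pn N 0 = 0"
  using Pn_sm[of N 0 0] by simp

lemma Pn_eig: "D w = sm c w \<Longrightarrow> Pn N w = sm (\<Prod>j<N. c - (of_nat j + 2)) w"
  by (induction N) (simp_all add: D_sm scale_left_diff_distrib[symmetric] algebra_simps)

lemma span_P: "u \<in> Sg \<Longrightarrow> \<exists>N. \<forall>M\<ge>N. Pn M u = 0"
  unfolding Sg_def
proof (induction rule: span_induct_alt)
  case base then show ?case by (auto simp: Pn_zero)
next
  case (step c x y)
  obtain d :: int where d: "d \<ge> 2" "D x = sm (of_int d) x" using mono_deg[of x] step by auto
  obtain N where N: "\<forall>M\<ge>N. Pn M y = 0" using step by auto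
  have "Pn M x = 0" if "M \<ge> nat d - 1" for M
  proof -
    have "nat d - 2 \<in> {..<M}" using that d by auto
    moreover have "of_int d - (of_nat (nat d - 2) + 2) = (0::complex)"
    proof -
      have "int (nat d - 2) + 2 = d" using d by auto
      then have "of_nat (nat d - 2) + 2 = (of_int d :: complex)"
        by (metis of_int_of_nat_eq of_int_add of_int_numeral)
      then show ?thesis by simp
    qed
    ultimately have P0: "(\<Prod>j<M. of_int d - (of_nat j + 2)) = (0::complex)"
      by (intro prod_zero) auto
    show ?thesis by (simp only: Pn_eig[OF d(2), of M] P0 scale_zero_left)
  qed
  then show ?case using N
    by (intro exI[of _ "max N (nat d - 1)"]) (simp add: Pn_add Pn_sm)
qed

lemma sm_nz: "c \<noteq> 0 \<Longrightarrow> v \<noteq> 0 \<Longrightarrow> sm c v \<noteq> 0"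
proof
  assume c: "c \<noteq> 0" and v: "v \<noteq> 0" and e: "sm c v = 0"
  have "v = sm (inverse c) (sm c v)" using c by simp
  then show False using e v by simp
qed

lemma Pn_vac: "Pn N vac \<noteq> 0"
proof -
  have "Pn N vac = sm (\<Prod>j<N. 0 - (of_nat j + 2)) vac"
    by (rule Pn_eig) (simp add: D_vac)
  moreover have "(\<Prod>j<N. 0 - (of_nat j + 2)) \<noteq> (0::complex)"
  proof -
    have f: "(0 - (of_nat j + 2) :: complex) \<noteq> 0" for j
    proof -
      have "(of_nat j + 2 :: complex) = of_nat (j + 2)" by simp
      then have h: "(of_nat j + 2 :: complex) \<noteq> 0" using of_nat_eq_0_iff[of "j + 2", where 'a=complex] by (simp add: add.commute)
      show ?thesis by (simp only: diff_0 neg_equal_0_iff_equal) (rule h)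
    qed
    show ?thesis by (subst prod_zero_iff) (use f in auto)
  qed
  ultimately show ?thesis using sm_nz vac_nz by simp
qed

lemma RR_zero: assumes k: "k = - of_nat l + 3/2" shows "RR = 0"
proof (rule ccontr)
  assume nz: "RR \<noteq> 0"
  have "Sg = UNIV"
  proof (rule simple)
    show "0 \<in> Sg" by (simp add: Sg_def span_zero)
    show "\<forall>v\<in>Sg. \<forall>w\<in>Sg. v + w \<in> Sg" by (simp add: Sg_def span_add)
    show "\<forall>c. \<forall>v\<in>Sg. sm c v \<in> Sg" by (simp add: Sg_def span_scale)
    show "\<forall>X\<in>gB l. \<forall>n. \<forall>v\<in>Sg. \<rho> X n v \<in> Sg" using span_rho[OF k] by blast
    show "\<forall>v\<in>Sg. D v \<in> Sg" using span_D by blast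
    show "Sg \<noteq> {0}" using Sg_base[OF mbase] nz by auto
  qed
  then obtain N where "\<forall>M\<ge>N. Pn M vac = 0" using span_P[of vac] by auto
  then show False using Pn_vac[of N] by auto
qed

end


lemma svm_intro:
  assumes H: "is_simple_vacuum_module l k sm \<rho> D vac" shows "svm sm l k \<rho> D vac"
proof -
  note h = H[unfolded is_simple_vacuum_module_def]
  note c1 = h[THEN conjunct1]
  note r1 = h[THEN conjunct2]
  note c2 = r1[THEN conjunct1]
  note r2 = r1[THEN conjunct2]
  note c3 = r2[THEN conjunct1]
  note r3 = r2[THEN conjunct2]
  note c4 = r3[THEN conjunct1]
  note r4 = r3[THEN conjunct2]
  note c5 = r4[THEN conjunct1]
  note r5 = r4[THEN conjunct2]
  note c6 = r5[THEN conjunct1]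
  note r6 = r5[THEN conjunct2]
  note c7 = r6[THEN conjunct1]
  note r7 = r6[THEN conjunct2]
  note c8 = r7[THEN conjunct1]
  note r8 = r7[THEN conjunct2]
  note c9 = r8[THEN conjunct1]
  note r9 = r8[THEN conjunct2]
  note c10 = r9[THEN conjunct1]
  note r10 = r9[THEN conjunct2]
  note c11 = r10[THEN conjunct1]
  note c12 = r10[THEN conjunct2]
  show ?thesis
    apply (rule svm.intro)
     apply (rule c1)
    apply (rule svm_axioms.intro)
    subgoal using c2 by blast
    subgoal using c3 by blast
    subgoal using c4 by blast
    subgoal using c5 by blast
    subgoal using c6 by blast
    subgoal using c7 by blast
    subgoal using c8 by blast
    subgoal using c9 by blast
    subgoal using c10 by blast
    subgoal using c11 by blast
    subgoal premises prems for U using c12[rule_format, of U] prems by blast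
    done
qed

theorem lemma5p3:
  fixes l :: nat and sm :: "complex \<Rightarrow> 'v::ab_group_add \<Rightarrow> 'v"
    and \<rho> :: "mat \<Rightarrow> int \<Rightarrow> 'v \<Rightarrow> 'v" and D :: "'v \<Rightarrow> 'v" and vac :: 'v
  assumes "l \<ge> 4"
    and "is_simple_vacuum_module l (- of_nat l + 3/2) sm \<rho> D vac"
  shows "sm (2 * of_nat l - 1)
           (\<Sum>i\<in>{1..l}. \<rho> (e_short l i) (-1) (\<rho> (f_short l i) (-1) vac)
                        + \<rho> (f_short l i) (-1) (\<rho> (e_short l i) (-1) vac))
       = sm 4 (\<Sum>r\<in>posD l. \<rho> (e_root l r) (-1) (\<rho> (f_root l r) (-1) vac)
                        + \<rho> (f_root l r) (-1) (\<rho> (e_root l r) (-1) vac))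
         + (\<Sum>i\<in>{1..l}. \<rho> (h_short l i) (-1) (\<rho> (h_short l i) (-1) vac))"
proof -
  interpret I: svm sm l "- of_nat l + 3/2" \<rho> D vac
    by (rule svm_intro[OF assms(2)])
  have "I.RR = 0" by (rule I.RR_zero) simp
  then show ?thesis
    unfolding I.RR_def I.Sv_def I.Lv_def I.Hv_def I.pv_def by simp
qed


end
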